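(* For every $n\in\mathbb{N}$, $g\big[\mathbf{RP}_n(\mathbb{R})\big] > \frac{1}{641}\,n^{1.669}$.
   Context: For an $n\times n$ complex matrix $A=(a_{i,j})$, Gaussian elimination without pivoting is the recursion $a^{(1)}_{i,j}=a_{i,j}$ and $a^{(k+1)}_{i,j}=a^{(k)}_{i,j}-a^{(k)}_{i,k}a^{(k)}_{k,j}/a^{(k)}_{k,k}$ for $k+1\le i,j\le n$, $k=1,\dots,n-1$ (defined when all pivots $a^{(k)}_{k,k}\neq0$). The growth factor is $g(A)=\max_{i,j,k}|a^{(k)}_{i,j}|/\max_{i,j}|a_{i,j}|$. For $S\subseteq\mathbb{C}$, $\mathbf{RP}_n(S)$ (rook pivoted matrices) is the set of invertible $A\in S^{n\times n}$ for which elimination without pivoting is defined and $|a^{(k)}_{i,k}|\le|a^{(k)}_{k,k}|$ and $|a^{(k)}_{k,j}|\le|a^{(k)}_{k,k}|$ for all $k$ and all $i,j\ge k$. For a set $\mathbf{X}$ of matrices, $g[\mathbf{X}]=\sup_{A\in\mathbf{X}}g(A)$. *)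

theory Defs
  imports Complex_Main "HOL-Library.Extended_Real"
begin

text \<open>n x n complex matrices are represented as functions nat => nat => complex,
  only the entries with indices 0..<n are relevant (0-based indexing:
  paper index i corresponds to i-1 here).\<close>

text \<open>Gaussian elimination without pivoting: ge A k i j is the paper's
  a^(k+1)_{i+1,j+1}.  Entries outside the active block are left unchanged.\<close>
fun ge :: "(nat \<Rightarrow> nat \<Rightarrow> complex) \<Rightarrow> nat \<Rightarrow> nat \<Rightarrow> nat \<Rightarrow> complex" where
  "ge A 0 i j = A i j"
| "ge A (Suc k) i j =
     (if k < i \<and> k < j
      then ge A k i j - ge A k i k * ge A k k j / ge A k k k
      else ge A k i j)"

definition invertible_mat :: "nat \<Rightarrow> (nat \<Rightarrow> nat \<Rightarrow> complex) \<Rightarrow> bool" where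
  "invertible_mat n A \<longleftrightarrow> (\<exists>B. \<forall>i<n. \<forall>j<n.
      (\<Sum>l<n. A i l * B l j) = (if i = j then 1 else 0))"

definition ge_defined :: "nat \<Rightarrow> (nat \<Rightarrow> nat \<Rightarrow> complex) \<Rightarrow> bool" where
  "ge_defined n A \<longleftrightarrow> (\<forall>k. k + 1 < n \<longrightarrow> ge A k k k \<noteq> 0)"

definition growth_factor :: "nat \<Rightarrow> (nat \<Rightarrow> nat \<Rightarrow> complex) \<Rightarrow> real" where
  "growth_factor n A =
     Max {norm (ge A k i j) | k i j. k < n \<and> k \<le> i \<and> i < n \<and> k \<le> j \<and> j < n}
     / Max {norm (A i j) | i j. i < n \<and> j < n}"

definition RP :: "nat \<Rightarrow> complex set \<Rightarrow> (nat \<Rightarrow> nat \<Rightarrow> complex) set" where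
  "RP n S = {A. (\<forall>i<n. \<forall>j<n. A i j \<in> S) \<and> invertible_mat n A \<and> ge_defined n A \<and>
      (\<forall>k<n. \<forall>i. k \<le> i \<and> i < n \<longrightarrow>
          norm (ge A k i k) \<le> norm (ge A k k k) \<and> norm (ge A k k i) \<le> norm (ge A k k k))}"

definition growth_sup :: "nat \<Rightarrow> (nat \<Rightarrow> nat \<Rightarrow> complex) set \<Rightarrow> ereal" where
  "growth_sup n X = (SUP A\<in>X. ereal (growth_factor n A))"

end

theory Submission
  imports Defs
begin



definition ldv :: "nat \<Rightarrow> (nat\<Rightarrow>nat\<Rightarrow>complex) \<Rightarrow> (nat\<Rightarrow>complex) \<Rightarrow> (nat\<Rightarrow>nat\<Rightarrow>complex) \<Rightarrow> nat\<Rightarrow>nat\<Rightarrow>complex" where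
 "ldv N L d V i j = (\<Sum>l<N. L i l * d l * V l j)"

lemma ge_ldv:
  assumes LT: "\<And>i l. i < l \<Longrightarrow> L i l = 0" and LD: "\<And>i. L i i = 1"
    and VT: "\<And>l j. j < l \<Longrightarrow> V l j = 0" and VD: "\<And>l. V l l = 1"
    and dnz: "\<And>l. l < N \<Longrightarrow> d l \<noteq> 0"
  shows "k \<le> i \<Longrightarrow> k \<le> j \<Longrightarrow> i < N \<Longrightarrow> j < N \<Longrightarrow>
     ge (ldv N L d V) k i j = (\<Sum>l\<in>{k..<N}. L i l * d l * V l j)"
proof (induction k arbitrary: i j)
  case 0
  then show ?case by (simp add: ldv_def atLeast0LessThan)
next
  case (Suc k)
  have kN: "k < N" using Suc by simp
  have split: "\<And>i j. (\<Sum>l\<in>{k..<N}. L i l * d l * V l j) = L i k * d k * V k j + (\<Sum>l\<in>{Suc k..<N}. L i l * d l * V l j)"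
    using kN by (simp add: sum.atLeast_Suc_lessThan)
  have z1: "(\<Sum>l\<in>{Suc k..<N}. L k l * d l * V l j) = 0" for j
    by (rule sum.neutral) (auto simp: LT)
  have z2: "(\<Sum>l\<in>{Suc k..<N}. L i l * d l * V l k) = 0" for i
    by (rule sum.neutral) (auto simp: VT)
  have piv: "ge (ldv N L d V) k k k = d k" using Suc.IH[of k k] kN split[of k k] z1[of k] by (simp add: LD VD)
  have col: "ge (ldv N L d V) k i k = L i k * d k" using Suc.IH[of i k] Suc.prems split[of i k] z2[of i] by (simp add: VD)
  have row: "ge (ldv N L d V) k k j = d k * V k j" using Suc.IH[of k j] Suc.prems kN split[of k j] z1[of j] by (simp add: LD)
  have cur: "ge (ldv N L d V) k i j = L i k * d k * V k j + (\<Sum>l\<in>{Suc k..<N}. L i l * d l * V l j)"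
    using Suc.IH[of i j] Suc.prems split[of i j] by simp
  have "k < i" "k < j" using Suc.prems by auto
  then show ?case using piv col row cur dnz[OF kN] by simp
qed



lemma inv_mult:
  assumes "invertible_mat N A" "invertible_mat N B"
  shows "invertible_mat N (\<lambda>i j. \<Sum>l<N. A i l * B l j)"
proof -
  obtain A' where A': "\<forall>i<N. \<forall>j<N. (\<Sum>l<N. A i l * A' l j) = (if i = j then 1 else 0)"
    using assms(1) unfolding invertible_mat_def by blast
  obtain B' where B': "\<forall>i<N. \<forall>j<N. (\<Sum>l<N. B i l * B' l j) = (if i = j then 1 else 0)"
    using assms(2) unfolding invertible_mat_def by blast
  show ?thesis unfolding invertible_mat_def
  proof (intro exI allI impI)
    fix i j assume i: "i < N" and j: "j < N"
    have "(\<Sum>l<N. (\<Sum>p<N. A i p * B p l) * (\<Sum>q<N. B' l q * A' q j))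
        = (\<Sum>l<N. \<Sum>p<N. \<Sum>q<N. A i p * (B p l * B' l q) * A' q j)"
      by (intro sum.cong refl, subst sum_product, intro sum.cong refl, simp add: mult_ac)
    also have "\<dots> = (\<Sum>p<N. \<Sum>l<N. \<Sum>q<N. A i p * (B p l * B' l q) * A' q j)"
      by (rule sum.swap)
    also have "\<dots> = (\<Sum>p<N. \<Sum>q<N. \<Sum>l<N. A i p * (B p l * B' l q) * A' q j)"
      by (rule sum.cong[OF refl], rule sum.swap)
    also have "\<dots> = (\<Sum>p<N. \<Sum>q<N. A i p * (\<Sum>l<N. B p l * B' l q) * A' q j)"
      by (simp add: sum_distrib_left sum_distrib_right)
    also have "\<dots> = (\<Sum>p<N. \<Sum>q<N. (if p = q then A i p * A' q j else 0))"
      using B' by (intro sum.cong refl) simp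
    also have "\<dots> = (\<Sum>p<N. A i p * A' p j)"
      by (simp add: sum.delta)
    also have "\<dots> = (if i = j then 1 else 0)" using A' i j by simp
    finally show "(\<Sum>l<N. (\<Sum>p<N. A i p * B p l) * (\<Sum>q<N. B' l q * A' q j)) = (if i = j then 1 else 0)" .
  qed
qed

lemma lower_inv:
  "(\<forall>i l. i < l \<longrightarrow> T i l = 0) \<Longrightarrow> (\<forall>i<N. T i i \<noteq> 0) \<Longrightarrow> invertible_mat N T"
proof (induction N)
  case 0
  then show ?case by (simp add: invertible_mat_def)
next
  case (Suc N)
  then obtain X where X: "\<forall>i<N. \<forall>j<N. (\<Sum>l<N. T i l * X l j) = (if i = j then 1 else 0)"
    unfolding invertible_mat_def by auto
  define X' where "X' i j = (if i < N then (if j < N then X i j else 0)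
      else if j < N then - (\<Sum>l<N. T N l * X l j) / T N N else 1 / T N N)" for i j
  have tnn: "T N N \<noteq> 0" using Suc.prems by auto
  show ?case unfolding invertible_mat_def
  proof (intro exI allI impI)
    fix i j assume i: "i < Suc N" and j: "j < Suc N"
    have s: "(\<Sum>l<Suc N. T i l * X' l j) = (\<Sum>l<N. T i l * X' l j) + T i N * X' N j"
      by simp
    have s2: "(\<Sum>l<N. T i l * X' l j) = (if j < N then (\<Sum>l<N. T i l * X l j) else 0)"
      by (auto simp: X'_def intro: sum.neutral)
    show "(\<Sum>l<Suc N. T i l * X' l j) = (if i = j then 1 else 0)"
    proof (cases "i < N")
      case True
      then have "T i N = 0" using Suc.prems by auto
      then show ?thesis using s s2 X True j by (auto simp: less_Suc_eq)
    next
      case False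
      then have iN: "i = N" using i by simp
      show ?thesis
      proof (cases "j < N")
        case True
        then show ?thesis using s s2 iN tnn by (simp add: X'_def)
      next
        case False
        then have "j = N" using j by simp
        then show ?thesis using s s2 iN tnn by (simp add: X'_def)
      qed
    qed
  qed
qed

lemma upper_inv:
  "(\<forall>l j. j < l \<longrightarrow> T l j = 0) \<Longrightarrow> (\<forall>i<N. T i i \<noteq> 0) \<Longrightarrow> invertible_mat N T"
proof (induction N)
  case 0
  then show ?case by (simp add: invertible_mat_def)
next
  case (Suc N)
  then obtain X where X: "\<forall>i<N. \<forall>j<N. (\<Sum>l<N. T i l * X l j) = (if i = j then 1 else 0)"
    unfolding invertible_mat_def by auto
  define X' where "X' i j = (if i < N then (if j < N then X i j else - (\<Sum>l<N. X i l * T l N) / T N N)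
      else if j = N then 1 / T N N else 0)" for i j
  have tnn: "T N N \<noteq> 0" using Suc.prems by auto
  show ?case unfolding invertible_mat_def
  proof (intro exI allI impI)
    fix i j assume i: "i < Suc N" and j: "j < Suc N"
    have s: "(\<Sum>l<Suc N. T i l * X' l j) = (\<Sum>l<N. T i l * X' l j) + T i N * X' N j"
      by simp
    show "(\<Sum>l<Suc N. T i l * X' l j) = (if i = j then 1 else 0)"
    proof (cases "i < N")
      case iN: True
      show ?thesis
      proof (cases "j < N")
        case True
        then show ?thesis using s X iN by (simp add: X'_def)
      next
        case False
        then have jN: "j = N" using j by simp
        have inner: "(\<Sum>l<N. \<Sum>p<N. T i l * X l p * T p N) = T i N"
        proof -
          have "(\<Sum>l<N. \<Sum>p<N. T i l * X l p * T p N) = (\<Sum>p<N. (\<Sum>l<N. T i l * X l p) * T p N)"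
            by (subst sum.swap) (simp add: sum_distrib_right)
          also have "\<dots> = (\<Sum>p<N. (if i = p then T p N else 0))"
            using X iN by (intro sum.cong refl) simp
          also have "\<dots> = T i N" using iN by (simp add: sum.delta sum.delta')
          finally show ?thesis .
        qed
        have "(\<Sum>l<N. T i l * X' l j) = (\<Sum>l<N. - (\<Sum>p<N. T i l * X l p * T p N) / T N N)"
          by (intro sum.cong refl) (simp add: X'_def jN sum_distrib_left mult_ac)
        also have "\<dots> = - (\<Sum>l<N. \<Sum>p<N. T i l * X l p * T p N) / T N N"
          by (simp add: sum_negf sum_divide_distrib)
        also have "\<dots> = - T i N / T N N" by (simp add: inner)
        finally have "(\<Sum>l<N. T i l * X' l j) = - T i N / T N N" .
        then show ?thesis using s jN tnn iN by (simp add: X'_def)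
      qed
    next
      case False
      then have iN: "i = N" using i by simp
      have "(\<Sum>l<N. T i l * X' l j) = 0"
        using Suc.prems iN by (intro sum.neutral) auto
      then show ?thesis using s iN tnn j by (auto simp: X'_def less_Suc_eq)
    qed
  qed
qed

definition kr :: "nat \<Rightarrow> (nat\<Rightarrow>nat\<Rightarrow>complex) \<Rightarrow> (nat\<Rightarrow>nat\<Rightarrow>complex) \<Rightarrow> nat\<Rightarrow>nat\<Rightarrow>complex" where
 "kr m X Y i j = X (i div m) (j div m) * Y (i mod m) (j mod m)"

definition krv :: "nat \<Rightarrow> (nat\<Rightarrow>complex) \<Rightarrow> (nat\<Rightarrow>complex) \<Rightarrow> nat\<Rightarrow>complex" where
 "krv m x y l = x (l div m) * y (l mod m)"

lemma sum_divmod: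
  fixes h :: "nat \<Rightarrow> nat \<Rightarrow> 'a::comm_monoid_add"
  assumes "m > 0"
  shows "(\<Sum>l<M*m. h (l div m) (l mod m)) = (\<Sum>a<M. \<Sum>b<m. h a b)"
proof (induction M)
  case 0
  then show ?case by simp
next
  case (Suc M)
  have "(\<Sum>l<Suc M*m. h (l div m) (l mod m)) = (\<Sum>l<M*m + m. h (l div m) (l mod m))"
    by (simp add: add.commute)
  also have "\<dots> = (\<Sum>l<M*m. h (l div m) (l mod m)) + (\<Sum>l=M*m..<M*m+m. h (l div m) (l mod m))"
    using sum.atLeastLessThan_concat[of 0 "M*m" "M*m+m" "\<lambda>l. h (l div m) (l mod m)"]
    by (simp add: atLeast0LessThan)
  also have "(\<Sum>l=M*m..<M*m+m. h (l div m) (l mod m)) = (\<Sum>b=0..<m. h ((b + M*m) div m) ((b + M*m) mod m))"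
    using sum.shift_bounds_nat_ivl[of "\<lambda>l. h (l div m) (l mod m)" 0 "M*m" m] by (simp add: add.commute)
  also have "\<dots> = (\<Sum>b<m. h M b)"
    using assms by (simp add: atLeast0LessThan)
  finally show ?case using Suc.IH by simp
qed

lemma ldv_kr:
  assumes "m > 0"
  shows "ldv (M*m) (kr m L1 L2) (krv m d1 d2) (kr m V1 V2) i j
      = ldv M L1 d1 V1 (i div m) (j div m) * ldv m L2 d2 V2 (i mod m) (j mod m)"
proof -
  have "ldv (M*m) (kr m L1 L2) (krv m d1 d2) (kr m V1 V2) i j
     = (\<Sum>l<M*m. (\<lambda>a b. (L1 (i div m) a * d1 a * V1 a (j div m)) * (L2 (i mod m) b * d2 b * V2 b (j mod m))) (l div m) (l mod m))"
    unfolding ldv_def kr_def krv_def by (simp add: mult_ac)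
  also have "\<dots> = (\<Sum>a<M. \<Sum>b<m. (L1 (i div m) a * d1 a * V1 a (j div m)) * (L2 (i mod m) b * d2 b * V2 b (j mod m)))"
    by (rule sum_divmod[OF assms])
  also have "\<dots> = ldv M L1 d1 V1 (i div m) (j div m) * ldv m L2 d2 V2 (i mod m) (j mod m)"
    unfolding ldv_def by (simp add: sum_product)
  finally show ?thesis .
qed

fun kp :: "nat \<Rightarrow> (nat\<Rightarrow>nat\<Rightarrow>complex) \<Rightarrow> nat \<Rightarrow> nat\<Rightarrow>nat\<Rightarrow>complex" where
  "kp m B 0 = (\<lambda>i j. if i = j then 1 else 0)"
| "kp m B (Suc k) = kr m (kp m B k) B"

fun kpv :: "nat \<Rightarrow> (nat\<Rightarrow>complex) \<Rightarrow> nat \<Rightarrow> nat\<Rightarrow>complex" where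
  "kpv m b 0 = (\<lambda>l. 1)"
| "kpv m b (Suc k) = krv m (kpv m b k) b"

lemma kp_lower:
  assumes "m > 0" "\<And>i l. i < l \<Longrightarrow> B i l = 0"
  shows "i < l \<Longrightarrow> kp m B k i l = 0"
proof (induction k arbitrary: i l)
  case 0 then show ?case by simp
next
  case (Suc k)
  show ?case
  proof (cases "i div m < l div m")
    case True then show ?thesis using Suc.IH by (simp add: kr_def)
  next
    case False
    then have "i div m = l div m" using Suc.prems div_le_mono[of i l m] by simp
    then have "i mod m < l mod m" using Suc.prems
      by (metis add_less_cancel_left div_mult_mod_eq)
    then show ?thesis using assms(2) by (simp add: kr_def)
  qed
qed

lemma kp_upper:
  assumes "m > 0" "\<And>l j. j < l \<Longrightarrow> B l j = 0"
  shows "j < l \<Longrightarrow> kp m B k l j = 0"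
proof (induction k arbitrary: j l)
  case 0 then show ?case by simp
next
  case (Suc k)
  show ?case
  proof (cases "j div m < l div m")
    case True then show ?thesis using Suc.IH by (simp add: kr_def)
  next
    case False
    then have "j div m = l div m" using Suc.prems div_le_mono[of j l m] by simp
    then have "j mod m < l mod m" using Suc.prems
      by (metis add_less_cancel_left div_mult_mod_eq)
    then show ?thesis using assms(2) by (simp add: kr_def)
  qed
qed

lemma kp_diag: assumes "\<And>i. B i i = 1" shows "kp m B k i i = 1"
  by (induction k arbitrary: i) (simp_all add: kr_def assms)

lemma kp_norm: assumes "\<And>i j. norm (B i j) \<le> 1" shows "norm (kp m B k i j) \<le> 1"
proof (induction k arbitrary: i j)
  case 0 then show ?case by simp
next
  case (Suc k)
  then show ?case using assms[of "i mod m" "j mod m"] Suc.IH[of "i div m" "j div m"]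
    by (simp add: kr_def norm_mult mult_le_one)
qed

lemma kp_real: assumes "\<And>i j. B i j \<in> \<real>" shows "kp m B k i j \<in> \<real>"
  by (induction k arbitrary: i j) (simp_all add: kr_def assms)

lemma kpv_real: assumes "\<And>i. b i \<in> \<real>" shows "kpv m b k i \<in> \<real>"
  by (induction k arbitrary: i) (simp_all add: krv_def assms)

lemma kpv_nz: assumes "m > 0" "\<And>l. l < m \<Longrightarrow> b l \<noteq> 0"
  shows "l < m^k \<Longrightarrow> kpv m b k l \<noteq> 0"
proof (induction k arbitrary: l)
  case 0 then show ?case by simp
next
  case (Suc k)
  have "l div m < m^k" using Suc.prems
    by (metis less_mult_imp_div_less mult.commute power_Suc)
  moreover have "l mod m < m" using assms(1) by simp
  ultimately show ?case using Suc.IH assms(2) by (simp add: krv_def)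
qed

lemma kpv_last: assumes "m > 0" shows "kpv m b k (m^k - 1) = b (m - 1) ^ k"
proof (induction k)
  case 0 then show ?case by simp
next
  case (Suc k)
  have pos: "m^k > 0" using assms by simp
  have e: "m^Suc k - 1 = (m^k - 1) * m + (m - 1)"
    using pos assms by (simp add: algebra_simps)
  have dm: "(a*m + x) div m = a \<and> (a*m + x) mod m = x" if "x < m" for a x
    using that by simp
  have lt: "m - 1 < m" using assms by simp
  have "((m^k - 1) * m + (m - 1)) div m = m^k - 1 \<and> ((m^k - 1) * m + (m - 1)) mod m = m - 1"
    by (rule dm[OF lt])
  then have "(m^Suc k - 1) div m = m^k - 1 \<and> (m^Suc k - 1) mod m = m - 1"
    by (simp only: e[symmetric])
  then show ?case using Suc.IH by (simp add: krv_def)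
qed

lemma kp_entries:
  assumes "m > 0" "\<And>i j. i < m \<Longrightarrow> j < m \<Longrightarrow> norm (ldv m L b V i j) \<le> 1"
  shows "i < m^k \<Longrightarrow> j < m^k \<Longrightarrow> norm (ldv (m^k) (kp m L k) (kpv m b k) (kp m V k) i j) \<le> 1"
proof (induction k arbitrary: i j)
  case 0
  then show ?case by (simp add: ldv_def)
next
  case (Suc k)
  have e: "m^Suc k = m^k * m" by simp
  have "i div m < m^k" "j div m < m^k" using Suc.prems
    by (metis less_mult_imp_div_less mult.commute power_Suc)+
  moreover have "i mod m < m" "j mod m < m" using assms(1) by simp_all
  ultimately show ?case
    unfolding e using Suc.IH assms(2) ldv_kr[OF assms(1), of "m^k"]
    by (simp add: norm_mult mult_le_one)
qed




locale ldvl =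
  fixes L V :: "nat\<Rightarrow>nat\<Rightarrow>complex" and d :: "nat \<Rightarrow> complex" and N :: nat
  assumes LT: "\<And>i l. i < l \<Longrightarrow> L i l = 0" and LD: "\<And>i. L i i = 1"
    and VT: "\<And>l j. j < l \<Longrightarrow> V l j = 0" and VD: "\<And>l. V l l = 1"
    and dnz: "\<And>l. l < N \<Longrightarrow> d l \<noteq> 0"
begin

lemma G: "k \<le> i \<Longrightarrow> k \<le> j \<Longrightarrow> i < N \<Longrightarrow> j < N \<Longrightarrow>
     ge (ldv N L d V) k i j = (\<Sum>l\<in>{k..<N}. L i l * d l * V l j)"
  by (rule ge_ldv) (use LT LD VT VD dnz in auto)

lemma parts:
  assumes kN: "k < N"
  shows "k \<le> i \<Longrightarrow> i < N \<Longrightarrow> ge (ldv N L d V) k i k = L i k * d k"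
    and "k \<le> j \<Longrightarrow> j < N \<Longrightarrow> ge (ldv N L d V) k k j = d k * V k j"
    and "ge (ldv N L d V) k k k = d k"
proof -
  have split: "\<And>i j. (\<Sum>l\<in>{k..<N}. L i l * d l * V l j) = L i k * d k * V k j + (\<Sum>l\<in>{Suc k..<N}. L i l * d l * V l j)"
    using kN by (simp add: sum.atLeast_Suc_lessThan)
  have z1: "(\<Sum>l\<in>{Suc k..<N}. L k l * d l * V l j) = 0" for j
    by (rule sum.neutral) (auto simp: LT)
  have z2: "(\<Sum>l\<in>{Suc k..<N}. L i l * d l * V l k) = 0" for i
    by (rule sum.neutral) (auto simp: VT)
  show "k \<le> i \<Longrightarrow> i < N \<Longrightarrow> ge (ldv N L d V) k i k = L i k * d k"
    using G[of k i k] kN split[of i k] z2[of i] by (simp add: VD)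
  show "k \<le> j \<Longrightarrow> j < N \<Longrightarrow> ge (ldv N L d V) k k j = d k * V k j"
    using G[of k k j] kN split[of k j] z1[of j] by (simp add: LD)
  show "ge (ldv N L d V) k k k = d k"
    using G[of k k k] kN split[of k k] z1[of k] by (simp add: LD VD)
qed

end

lemma ldv_growth:
  fixes L V :: "nat\<Rightarrow>nat\<Rightarrow>complex" and d :: "nat \<Rightarrow> complex"
  assumes LT: "\<And>i l. i < l \<Longrightarrow> L i l = 0" and LD: "\<And>i. L i i = 1"
    and VT: "\<And>l j. j < l \<Longrightarrow> V l j = 0" and VD: "\<And>l. V l l = 1"
    and dnz: "\<And>l. l < n \<Longrightarrow> d l \<noteq> 0"
    and Ln: "\<And>i j. norm (L i j) \<le> 1" and Vn: "\<And>i j. norm (V i j) \<le> 1"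
    and LR: "\<And>i j. L i j \<in> \<real>" and VR: "\<And>i j. V i j \<in> \<real>" and dR: "\<And>l. d l \<in> \<real>"
    and An: "\<And>i j. i<n \<Longrightarrow> j<n \<Longrightarrow> norm (ldv n L d V i j) \<le> 1"
    and p: "p < n"
  shows "ereal (norm (d p)) \<le> growth_sup n (RP n \<real>)"
proof -
  define A where "A = ldv n L d V"
  interpret ldvl L V d n by unfold_locales (use LT LD VT VD dnz in auto)
  note P = parts[folded A_def]
  have inv: "invertible_mat n A"
  proof -
    have eq: "A = (\<lambda>i j. \<Sum>l<n. L i l * (\<lambda>l j. d l * V l j) l j)"
      by (simp add: A_def ldv_def mult.assoc fun_eq_iff)
    have i1: "invertible_mat n L" by (rule lower_inv) (auto simp: LT LD)
    have i2: "invertible_mat n (\<lambda>l j. d l * V l j)" by (rule upper_inv) (auto simp: VT VD dnz)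
    show ?thesis unfolding eq by (rule inv_mult[OF i1 i2])
  qed
  have real: "A i j \<in> \<real>" for i j
    unfolding A_def ldv_def using LR VR dR by (intro sum_in_Reals Reals_mult) auto
  have gd: "ge_defined n A" unfolding ge_defined_def using P(3) dnz by simp
  have rook: "\<forall>k<n. \<forall>i. k \<le> i \<and> i < n \<longrightarrow>
          norm (ge A k i k) \<le> norm (ge A k k k) \<and> norm (ge A k k i) \<le> norm (ge A k k k)"
  proof (intro allI impI)
    fix k i assume k: "k < n" and ki: "k \<le> i \<and> i < n"
    have h1: "norm (L i k) * norm (d k) \<le> norm (d k)" using Ln[of i k] by (simp add: mult_left_le_one_le)
    have h2: "norm (d k) * norm (V k i) \<le> norm (d k)" using Vn[of k i] by (simp add: mult_right_le_one_le)
    show "norm (ge A k i k) \<le> norm (ge A k k k) \<and> norm (ge A k k i) \<le> norm (ge A k k k)"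
    proof -
      have e1: "ge A k i k = L i k * d k" using P(1)[OF k] ki by simp
      have e2: "ge A k k i = d k * V k i" using P(2)[OF k] ki by simp
      have e3: "ge A k k k = d k" using P(3)[OF k] .
      show ?thesis unfolding e1 e2 e3 norm_mult using h1 h2 by simp
    qed
  qed
  have inRP: "A \<in> RP n \<real>" unfolding RP_def using real inv gd rook by blast
  define S1 where "S1 = {norm (ge A k i j) | k i j. k < n \<and> k \<le> i \<and> i < n \<and> k \<le> j \<and> j < n}"
  define S2 where "S2 = {norm (A i j) | i j. i < n \<and> j < n}"
  have fin1: "finite S1"
  proof -
    have "S1 \<subseteq> (\<lambda>(k,i,j). norm (ge A k i j)) ` ({..<n} \<times> {..<n} \<times> {..<n})"
    proof
      fix x assume "x \<in> S1"
      then obtain k i j where "x = norm (ge A k i j)" "k<n" "i<n" "j<n" unfolding S1_def by auto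
      then show "x \<in> (\<lambda>(k,i,j). norm (ge A k i j)) ` ({..<n} \<times> {..<n} \<times> {..<n})"
        by (auto intro!: image_eqI[where x="(k,i,j)"])
    qed
    then show ?thesis by (rule finite_subset) simp
  qed
  have fin2: "finite S2"
  proof -
    have "S2 \<subseteq> (\<lambda>(i,j). norm (A i j)) ` ({..<n} \<times> {..<n})"
    proof
      fix x assume "x \<in> S2"
      then obtain i j where "x = norm (A i j)" "i<n" "j<n" unfolding S2_def by auto
      then show "x \<in> (\<lambda>(i,j). norm (A i j)) ` ({..<n} \<times> {..<n})"
        by (auto intro!: image_eqI[where x="(i,j)"])
    qed
    then show ?thesis by (rule finite_subset) simp
  qed
  have "norm (d p) \<in> S1" unfolding S1_def using P(3)[OF p] p by force
  then have m1: "norm (d p) \<le> Max S1" using fin1 by simp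
  have n0: "0 < n" using p by simp
  have a00: "A 0 0 = d 0" using P(3)[OF n0] by simp
  have "norm (d 0) \<in> S2" unfolding S2_def using a00 n0 by force
  then have "norm (d 0) \<le> Max S2" using fin2 by simp
  moreover have "0 < norm (d 0)" using dnz[OF n0] by simp
  ultimately have m2pos: "0 < Max S2" by linarith
  have m2le: "Max S2 \<le> 1"
  proof -
    have "S2 \<noteq> {}" using \<open>norm (d 0) \<in> S2\<close> by blast
    moreover have "\<forall>x\<in>S2. x \<le> 1" unfolding S2_def A_def using An by auto
    ultimately show ?thesis using fin2 by simp
  qed
  have m1pos: "0 \<le> Max S1" using m1 norm_ge_zero[of "d p"] by linarith
  have "Max S1 * Max S2 \<le> Max S1" using m1pos m2pos m2le by (simp add: mult_right_le_one_le)
  then have "Max S1 \<le> Max S1 / Max S2"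
    using m2pos by (simp add: le_divide_eq)
  then have "norm (d p) \<le> growth_factor n A"
    unfolding growth_factor_def S1_def[symmetric] S2_def[symmetric] using m1 by linarith
  then have "ereal (norm (d p)) \<le> ereal (growth_factor n A)" by simp
  also have "\<dots> \<le> growth_sup n (RP n \<real>)"
    unfolding growth_sup_def using inRP by (rule SUP_upper)
  finally show ?thesis .
qed



lemma exists_k:
  assumes "m \<ge> (2::nat)" "n \<ge> 1"
  shows "\<exists>k. m^k \<le> n \<and> n < m^Suc k"
proof -
  have ex: "\<exists>k. n < m^Suc k"
  proof
    have "n < 2^n" by (rule less_exp)
    also have "\<dots> \<le> m^n" using assms(1) by (simp add: power_mono)
    also have "\<dots> \<le> m^Suc n" using assms(1) by (simp add: power_increasing)
    finally show "n < m^Suc n" .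
  qed
  define k where "k = (LEAST k. n < m^Suc k)"
  have k1: "n < m^Suc k" unfolding k_def using ex by (rule LeastI_ex)
  have k2: "m^k \<le> n"
  proof (cases k)
    case 0 then show ?thesis using assms by simp
  next
    case (Suc k')
    then have "\<not> n < m^Suc k'" using not_less_Least[of k' "\<lambda>k. n < m^Suc k"] k_def by simp
    then show ?thesis using Suc by simp
  qed
  show ?thesis using k1 k2 by blast
qed

definition padm :: "nat \<Rightarrow> (nat\<Rightarrow>nat\<Rightarrow>complex) \<Rightarrow> nat\<Rightarrow>nat\<Rightarrow>complex" where
  "padm N X i j = (if i < N \<and> j < N then X i j else if i = j then 1 else 0)"
definition padv :: "nat \<Rightarrow> (nat\<Rightarrow>complex) \<Rightarrow> nat\<Rightarrow>complex" where
  "padv N x l = (if l < N then x l else 1)"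

lemma ldv_pad:
  assumes "N \<le> n" "i < n" "j < n"
  shows "ldv n (padm N L) (padv N d) (padm N V) i j
       = (if i < N \<and> j < N then ldv N L d V i j else if i = j then 1 else 0)"
proof -
  have split: "(\<Sum>l<n. f l) = (\<Sum>l<N. f l) + (\<Sum>l\<in>{N..<n}. f l)" for f :: "nat \<Rightarrow> complex"
    using sum.atLeastLessThan_concat[of 0 N n f] assms(1) by (simp add: atLeast0LessThan)
  show ?thesis
  proof (cases "i < N")
    case iN: True
    show ?thesis
    proof (cases "j < N")
      case True
      have "(\<Sum>l\<in>{N..<n}. padm N L i l * padv N d l * padm N V l j) = 0"
        using iN by (intro sum.neutral) (auto simp: padm_def)
      moreover have "(\<Sum>l<N. padm N L i l * padv N d l * padm N V l j) = ldv N L d V i j"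
        using iN True by (simp add: ldv_def padm_def padv_def)
      ultimately show ?thesis unfolding ldv_def[of n] using split iN True by (simp add: ldv_def)
    next
      case False
      have "(\<Sum>l<n. padm N L i l * padv N d l * padm N V l j)
          = (\<Sum>l<n. if l = j then padm N L i l * padv N d l else 0)"
        using False by (intro sum.cong refl) (auto simp: padm_def)
      also have "\<dots> = 0" using assms iN False by (simp add: padm_def)
      finally show ?thesis using iN False by (simp add: ldv_def)
    qed
  next
    case False
    have "(\<Sum>l<n. padm N L i l * padv N d l * padm N V l j)
        = (\<Sum>l<n. if l = i then padv N d l * padm N V l j else 0)"
      using False by (intro sum.cong refl) (auto simp: padm_def)
    also have "\<dots> = (if i = j then 1 else 0)" using assms False by (simp add: padm_def padv_def)
    finally show ?thesis using False by (simp add: ldv_def)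
  qed
qed

lemma main_from_base:
  fixes Lb Vb :: "nat\<Rightarrow>nat\<Rightarrow>complex" and db :: "nat \<Rightarrow> complex" and m :: nat and c :: real
  assumes m: "m \<ge> 2"
    and LT: "\<And>i l. i < l \<Longrightarrow> Lb i l = 0" and LD: "\<And>i. Lb i i = 1"
    and VT: "\<And>l j. j < l \<Longrightarrow> Vb l j = 0" and VD: "\<And>l. Vb l l = 1"
    and dnz: "\<And>l. l < m \<Longrightarrow> db l \<noteq> 0"
    and Ln: "\<And>i j. norm (Lb i j) \<le> 1" and Vn: "\<And>i j. norm (Vb i j) \<le> 1"
    and LR: "\<And>i j. Lb i j \<in> \<real>" and VR: "\<And>i j. Vb i j \<in> \<real>" and dR: "\<And>l. db l \<in> \<real>"
    and An: "\<And>i j. i<m \<Longrightarrow> j<m \<Longrightarrow> norm (ldv m Lb db Vb i j) \<le> 1"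
    and cG: "c \<le> norm (db (m - 1))" and c1: "real m powr 1.669 \<le> c" and c2: "c \<le> 641"
    and n: "n \<ge> 1"
  shows "growth_sup n (RP n \<real>) > ereal (real n powr 1.669 / 641)"
proof -
  have m0: "m > 0" using m by simp
  obtain k where k1: "m^k \<le> n" and k2: "n < m^Suc k" using exists_k[OF m n] by blast
  define N where "N = m^k"
  have N1: "N \<ge> 1" using m0 by (simp add: N_def)
  define L where "L = padm N (kp m Lb k)"
  define V where "V = padm N (kp m Vb k)"
  define d where "d = padv N (kpv m db k)"
  have "ereal (norm (d (N - 1))) \<le> growth_sup n (RP n \<real>)"
  proof (rule ldv_growth)
    show "\<And>i l. i < l \<Longrightarrow> L i l = 0" using kp_lower[where B=Lb, OF m0 LT] by (auto simp: L_def padm_def)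
    show "\<And>i. L i i = 1" using kp_diag[where B=Lb, OF LD] by (auto simp: L_def padm_def)
    show "\<And>l j. j < l \<Longrightarrow> V l j = 0" using kp_upper[where B=Vb, OF m0 VT] by (auto simp: V_def padm_def)
    show "\<And>i. V i i = 1" using kp_diag[where B=Vb, OF VD] by (auto simp: V_def padm_def)
    show "\<And>l. l < n \<Longrightarrow> d l \<noteq> 0" using kpv_nz[where b=db, OF m0 dnz] by (auto simp: d_def padv_def N_def)
    show "\<And>i j. norm (L i j) \<le> 1" using kp_norm[where B=Lb, OF Ln] by (auto simp: L_def padm_def)
    show "\<And>i j. norm (V i j) \<le> 1" using kp_norm[where B=Vb, OF Vn] by (auto simp: V_def padm_def)
    show "\<And>i j. L i j \<in> \<real>" using kp_real[where B=Lb, OF LR] by (auto simp: L_def padm_def)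
    show "\<And>i j. V i j \<in> \<real>" using kp_real[where B=Vb, OF VR] by (auto simp: V_def padm_def)
    show "\<And>l. d l \<in> \<real>" using kpv_real[where b=db, OF dR] by (auto simp: d_def padv_def)
    show "\<And>i j. i<n \<Longrightarrow> j<n \<Longrightarrow> norm (ldv n L d V i j) \<le> 1"
    proof -
      fix i j assume i: "i < n" and j: "j < n"
      show "norm (ldv n L d V i j) \<le> 1"
        unfolding L_def V_def d_def ldv_pad[OF k1[folded N_def] i j]
        using kp_entries[where L=Lb and b=db and V=Vb, OF m0 An, of i k j] by (auto simp: N_def)
    qed
    show "N - 1 < n" using k1 N1 by (simp add: N_def)
  qed
  moreover have "d (N - 1) = db (m - 1) ^ k"
  proof -
    have lt: "N - 1 < N" using N1 by simp
    have "d (N - 1) = kpv m db k (m^k - 1)" using lt by (simp add: d_def padv_def N_def)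
    also have "\<dots> = db (m - 1) ^ k" by (rule kpv_last[OF m0])
    finally show ?thesis .
  qed
  ultimately have ge: "ereal (norm (db (m - 1)) ^ k) \<le> growth_sup n (RP n \<real>)"
    by (simp add: norm_power)
  have c0: "0 \<le> c" using c1 by (smt (verit) powr_ge_zero)
  have k2r: "real n < real (m^Suc k)" using k2 by (simp only: of_nat_less_iff)
  have "real n powr 1.669 < real (m^Suc k) powr 1.669"
    using k2r by (intro powr_less_mono2) auto
  also have "real (m^Suc k) powr 1.669 = (real m powr 1.669) ^ Suc k"
  proof -
    have mpos: "0 < real m" using m0 by simp
    have "real (m^Suc k) powr 1.669 = (real m powr real (Suc k)) powr 1.669"
      by (simp only: of_nat_power powr_realpow[OF mpos])
    also have "\<dots> = real m powr (real (Suc k) * 1.669)" by (rule powr_powr)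
    also have "\<dots> = (real m powr 1.669) ^ Suc k" using mpos by (simp only: powr_power)
    finally show ?thesis .
  qed
  also have "\<dots> \<le> c ^ Suc k" using c1 by (intro power_mono) auto
  also have "\<dots> = c * c^k" by simp
  also have "\<dots> \<le> 641 * c^k" using c2 c0 by (intro mult_right_mono) auto
  finally have "real n powr 1.669 / 641 < c^k" by simp
  also have "c^k \<le> norm (db (m - 1)) ^ k" using cG c0 by (intro power_mono) auto
  finally have "ereal (real n powr 1.669 / 641) < ereal (norm (db (m - 1)) ^ k)" by simp
  then show ?thesis using ge by (rule less_le_trans)
qed


definition LI :: "int list list" where "LI = [
  [1024,0,0,0,0,0,0,0,0,0,0,0,0,0,0,0,0,0,0,0,0,0,0,0,0,0,0,0,0,0,0,0,0,0,0,0],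
  [-1,1024,0,0,0,0,0,0,0,0,0,0,0,0,0,0,0,0,0,0,0,0,0,0,0,0,0,0,0,0,0,0,0,0,0,0],
  [-10,8,1024,0,0,0,0,0,0,0,0,0,0,0,0,0,0,0,0,0,0,0,0,0,0,0,0,0,0,0,0,0,0,0,0,0],
  [4,1,-2,1024,0,0,0,0,0,0,0,0,0,0,0,0,0,0,0,0,0,0,0,0,0,0,0,0,0,0,0,0,0,0,0,0],
  [-12,3,9,4,1024,0,0,0,0,0,0,0,0,0,0,0,0,0,0,0,0,0,0,0,0,0,0,0,0,0,0,0,0,0,0,0],
  [7,3,-12,-2,3,1024,0,0,0,0,0,0,0,0,0,0,0,0,0,0,0,0,0,0,0,0,0,0,0,0,0,0,0,0,0,0],
  [7,-2,-5,0,2,-2,1024,0,0,0,0,0,0,0,0,0,0,0,0,0,0,0,0,0,0,0,0,0,0,0,0,0,0,0,0,0],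
  [-6,5,0,-8,18,-8,16,1024,0,0,0,0,0,0,0,0,0,0,0,0,0,0,0,0,0,0,0,0,0,0,0,0,0,0,0,0],
  [-572,206,-145,-402,748,384,-154,507,1024,0,0,0,0,0,0,0,0,0,0,0,0,0,0,0,0,0,0,0,0,0,0,0,0,0,0,0],
  [-1009,824,953,-48,-278,170,-147,31,-145,1024,0,0,0,0,0,0,0,0,0,0,0,0,0,0,0,0,0,0,0,0,0,0,0,0,0,0],
  [127,-234,-43,972,-1023,178,-666,-1024,-853,39,1024,0,0,0,0,0,0,0,0,0,0,0,0,0,0,0,0,0,0,0,0,0,0,0,0,0],
  [-735,-563,-164,-209,-802,177,-976,-353,307,479,757,1024,0,0,0,0,0,0,0,0,0,0,0,0,0,0,0,0,0,0,0,0,0,0,0,0],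
  [573,46,-257,-266,962,-481,1022,759,323,-248,-499,-304,1024,0,0,0,0,0,0,0,0,0,0,0,0,0,0,0,0,0,0,0,0,0,0,0],
  [740,1024,1024,1024,945,-385,880,392,-676,302,-378,-859,945,1024,0,0,0,0,0,0,0,0,0,0,0,0,0,0,0,0,0,0,0,0,0,0],
  [-1024,1020,1024,917,-1024,946,-980,-391,-376,767,473,64,-783,-34,1024,0,0,0,0,0,0,0,0,0,0,0,0,0,0,0,0,0,0,0,0,0],
  [829,1024,-74,733,590,38,869,-50,-772,-269,-241,-807,482,468,-13,1024,0,0,0,0,0,0,0,0,0,0,0,0,0,0,0,0,0,0,0,0],
  [-586,1022,-1022,-931,998,807,-273,1024,1024,-455,-1016,-301,70,390,255,126,1024,0,0,0,0,0,0,0,0,0,0,0,0,0,0,0,0,0,0,0],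
  [554,1023,807,1008,1013,-1024,907,29,-858,544,-214,-541,1010,1011,-621,597,-136,1024,0,0,0,0,0,0,0,0,0,0,0,0,0,0,0,0,0,0],
  [1024,1024,-1020,867,274,586,347,-838,-973,-988,53,-759,231,-274,71,854,-10,-596,1024,0,0,0,0,0,0,0,0,0,0,0,0,0,0,0,0,0],
  [-1024,1007,-1019,1021,1016,-1024,-1005,-1024,1024,-989,564,-282,-256,-765,583,130,-1,703,-582,1024,0,0,0,0,0,0,0,0,0,0,0,0,0,0,0,0],
  [-1024,587,-1024,1024,-508,1024,968,922,522,-135,-1022,-944,-746,66,470,225,371,-135,-821,-13,1024,0,0,0,0,0,0,0,0,0,0,0,0,0,0,0],
  [969,-479,-1021,1024,-1024,-249,-1020,-1024,-1003,-1024,1024,144,-579,-832,-81,935,-393,-208,414,99,-266,1024,0,0,0,0,0,0,0,0,0,0,0,0,0,0],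
  [-1023,-114,1009,-587,1024,816,1018,-1024,906,1024,781,781,1024,-1006,-534,956,-1010,-1024,1015,209,-133,-798,1024,0,0,0,0,0,0,0,0,0,0,0,0,0],
  [1024,947,173,-1012,1024,201,-1023,-545,-1024,-102,1020,442,-1024,-739,911,-1024,-768,1024,954,-446,-1024,1022,-978,1024,0,0,0,0,0,0,0,0,0,0,0,0],
  [-1024,1024,-1024,-139,1024,-1024,-1021,753,-713,1024,1024,687,1024,967,-423,-110,1008,1024,-282,-6,-814,1024,-593,-321,1024,0,0,0,0,0,0,0,0,0,0,0],
  [-1024,-1024,1013,-1024,-524,-1024,-1024,-887,-1024,505,-1024,-994,706,-1023,986,988,-319,-1024,-357,732,-886,1024,1001,-1022,46,1024,0,0,0,0,0,0,0,0,0,0],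
  [883,960,1024,1021,996,-1024,-1024,-1024,954,-1024,-762,-1024,1024,-126,607,-43,188,322,-620,752,-91,135,353,-43,-254,108,1024,0,0,0,0,0,0,0,0,0],
  [1023,1024,-942,-1024,-1024,1024,-1004,1016,953,-1024,148,630,1024,293,-1024,1024,-1024,1024,1024,380,-1024,-690,-1024,-1024,1018,-993,-1024,1024,0,0,0,0,0,0,0,0],
  [-1019,1019,1024,-1024,-33,1024,1024,723,1024,975,1024,-37,-606,-416,1022,-687,-1024,213,-1024,165,-877,1023,-409,-444,1024,395,-1024,62,1024,0,0,0,0,0,0,0],
  [-1022,851,-1024,-1023,1024,-1024,-1024,1017,1024,877,196,-1024,-412,-337,-1023,-1024,-766,-1024,-1024,-1024,-1014,-1024,1024,1024,1024,-1024,-981,-414,-411,1024,0,0,0,0,0,0],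
  [-1024,-1023,-1023,1024,-1024,1020,-1023,1024,-558,613,-1024,1024,1024,-756,-1015,-1024,-1021,1021,318,417,148,-1020,-918,-350,1007,-943,-886,750,-412,10,1024,0,0,0,0,0],
  [-1013,-1024,-1024,-1024,-996,-1024,1012,936,-1024,1024,633,-1024,186,1024,1024,1024,859,1024,1024,1024,-1024,-1024,-40,1024,-720,955,-915,-703,1024,-444,970,1024,0,0,0,0],
  [-1024,1024,-1024,997,-1024,-1004,1024,-1024,1018,-1024,1012,-254,1024,1024,1023,-1024,-1024,-1024,-1023,-1024,-1024,1024,1024,-636,-1024,-946,-993,832,-1024,953,1024,-1023,1024,0,0,0],
  [1024,-729,1024,1022,-1024,-1012,-1024,1024,1023,1024,1024,-412,1018,-1023,-967,1024,1024,-1024,-1024,915,-1023,-1024,-1024,1024,-969,1024,-922,-721,-1023,323,-154,-1024,-5,1024,0,0],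
  [-992,-1024,-1024,1024,1023,1007,-1015,-1024,1024,1024,-1024,-1024,1022,-1024,-792,-1023,1024,-1023,763,85,-642,1024,-797,1024,-1023,-161,-1024,1024,1024,-215,-1024,-746,-391,101,1024,0],
  [1024,1024,1014,-1024,1024,1024,-1024,-1024,-1024,-1024,-1024,1024,1024,-1024,1024,-964,-1024,1024,-1024,-1024,1024,1024,1024,-1024,1024,-1024,-1024,-1024,-1024,-1024,-1024,1024,1024,1024,1024,1024]]"

definition VC :: "int list list" where "VC = [
  [1024,0,0,0,0,0,0,0,0,0,0,0,0,0,0,0,0,0,0,0,0,0,0,0,0,0,0,0,0,0,0,0,0,0,0,0],
  [-4,1024,0,0,0,0,0,0,0,0,0,0,0,0,0,0,0,0,0,0,0,0,0,0,0,0,0,0,0,0,0,0,0,0,0,0],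
  [-5,-2,1024,0,0,0,0,0,0,0,0,0,0,0,0,0,0,0,0,0,0,0,0,0,0,0,0,0,0,0,0,0,0,0,0,0],
  [-2,2,3,1024,0,0,0,0,0,0,0,0,0,0,0,0,0,0,0,0,0,0,0,0,0,0,0,0,0,0,0,0,0,0,0,0],
  [7,-1,-2,9,1024,0,0,0,0,0,0,0,0,0,0,0,0,0,0,0,0,0,0,0,0,0,0,0,0,0,0,0,0,0,0,0],
  [-4,-4,1,1,8,1024,0,0,0,0,0,0,0,0,0,0,0,0,0,0,0,0,0,0,0,0,0,0,0,0,0,0,0,0,0,0],
  [3,-3,-1,1,4,-2,1024,0,0,0,0,0,0,0,0,0,0,0,0,0,0,0,0,0,0,0,0,0,0,0,0,0,0,0,0,0],
  [17,18,4,45,20,19,19,1024,0,0,0,0,0,0,0,0,0,0,0,0,0,0,0,0,0,0,0,0,0,0,0,0,0,0,0,0],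
  [157,-114,-69,-144,27,-75,70,-113,1024,0,0,0,0,0,0,0,0,0,0,0,0,0,0,0,0,0,0,0,0,0,0,0,0,0,0,0],
  [1011,906,-858,-250,-662,-83,283,-997,263,1024,0,0,0,0,0,0,0,0,0,0,0,0,0,0,0,0,0,0,0,0,0,0,0,0,0,0],
  [-946,-1021,905,535,893,595,-428,1019,-418,-692,1024,0,0,0,0,0,0,0,0,0,0,0,0,0,0,0,0,0,0,0,0,0,0,0,0,0],
  [798,866,-793,-205,-673,-1024,667,-937,453,782,-879,1024,0,0,0,0,0,0,0,0,0,0,0,0,0,0,0,0,0,0,0,0,0,0,0,0],
  [-1024,-1011,676,171,755,924,-410,954,-608,-1001,976,-566,1024,0,0,0,0,0,0,0,0,0,0,0,0,0,0,0,0,0,0,0,0,0,0,0],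
  [-280,-1024,551,20,546,1023,-1022,-70,207,-317,419,-337,190,1024,0,0,0,0,0,0,0,0,0,0,0,0,0,0,0,0,0,0,0,0,0,0],
  [1024,-6,-1002,646,116,-350,-199,286,819,842,-417,594,156,-73,1024,0,0,0,0,0,0,0,0,0,0,0,0,0,0,0,0,0,0,0,0,0],
  [815,906,-1024,200,-353,-827,4,-659,739,1021,-887,750,-331,-15,416,1024,0,0,0,0,0,0,0,0,0,0,0,0,0,0,0,0,0,0,0,0],
  [-1024,1012,930,-1015,-1024,158,1006,-180,-1024,-1023,412,-197,436,-715,-935,-909,1024,0,0,0,0,0,0,0,0,0,0,0,0,0,0,0,0,0,0,0],
  [-953,110,999,-839,-1024,257,830,-886,-76,-699,355,-898,197,-506,-928,-733,386,1024,0,0,0,0,0,0,0,0,0,0,0,0,0,0,0,0,0,0],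
  [-912,563,1003,158,-412,-668,-49,1010,-17,-656,-107,-33,418,-277,175,-602,127,-298,1024,0,0,0,0,0,0,0,0,0,0,0,0,0,0,0,0,0],
  [1006,1019,-1024,-1024,220,688,-45,-1010,-1024,255,-413,662,-371,1024,-363,-1023,-287,-1024,-664,1024,0,0,0,0,0,0,0,0,0,0,0,0,0,0,0,0],
  [983,1024,-1020,-1023,-760,-1019,-1024,489,425,954,1024,-784,1024,27,508,-914,-493,-583,656,347,1024,0,0,0,0,0,0,0,0,0,0,0,0,0,0,0],
  [693,362,-279,-1023,-997,-1024,-1015,1024,1024,768,769,-1024,704,293,-223,-316,-607,-183,738,269,914,1024,0,0,0,0,0,0,0,0,0,0,0,0,0,0],
  [1024,1023,527,1024,-1023,1014,1022,1024,-33,92,-366,654,-1023,-628,-1023,-1024,1024,1024,323,449,-680,475,1024,0,0,0,0,0,0,0,0,0,0,0,0,0],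
  [-1021,1024,542,-1023,-1024,1024,-189,487,-1003,-1024,-840,1024,1021,1024,-831,311,-871,-526,-696,773,224,1024,207,1024,0,0,0,0,0,0,0,0,0,0,0,0],
  [-1022,-910,1024,1023,-1024,-983,998,-1024,853,-1024,-1024,1014,1024,771,1023,1018,102,-1017,240,-120,-1,310,-259,855,1024,0,0,0,0,0,0,0,0,0,0,0],
  [-839,1024,-1024,1024,-1017,1024,-1024,-975,1024,-1024,-976,184,1024,403,-1024,-1024,-1024,914,114,-1024,-98,-515,113,137,189,1024,0,0,0,0,0,0,0,0,0,0],
  [-67,-1019,-587,-1024,297,1021,679,353,-1023,1024,1024,-958,738,-1024,779,697,175,288,-1024,-107,-254,-350,-334,-264,-358,-513,1024,0,0,0,0,0,0,0,0,0],
  [1024,1023,1024,-750,91,-1024,-1024,1007,-1024,-1004,1024,1024,1024,-1024,1024,1024,1023,1024,-1024,-933,1022,-1019,1024,1023,648,845,-1024,1024,0,0,0,0,0,0,0,0],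
  [-1024,1024,-1023,1024,75,-1009,-1015,1012,-994,25,-1024,1024,1024,-1024,314,1024,-1023,-1022,-1024,-952,-698,-1017,-942,-813,-1024,-511,851,-558,1024,0,0,0,0,0,0,0],
  [1024,-1024,1019,-1024,1024,1024,-108,-1017,-1019,927,-1024,1024,1024,-1024,1024,1013,1023,1024,1024,952,1024,1024,-785,-1024,-905,-923,-656,-860,899,1024,0,0,0,0,0,0],
  [1024,1024,1024,-986,1024,-1024,-1024,-1024,1024,358,1024,-1015,-885,-1023,-1024,1024,1018,-1010,-1009,-1024,164,-53,-137,-112,103,-69,-21,235,123,-462,1024,0,0,0,0,0],
  [902,1024,1023,1024,1022,1024,1024,-1023,1024,321,1022,1024,1024,-1024,-1024,-1024,1024,-1024,-1024,75,618,1024,-1024,-144,-1024,989,-1022,1024,-1024,1020,-539,1024,0,0,0,0],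
  [1017,-1024,1024,1022,1024,-613,-1024,1024,-802,1024,-1023,1020,-1024,-1024,-1024,986,1024,-1024,1024,1024,1024,-1024,-1024,1023,999,1024,1024,977,1024,1001,-1017,379,1024,0,0,0],
  [-1024,1024,-1022,-1018,1024,-1024,1024,-1023,-995,-750,929,1024,-1007,1024,1024,-1024,-19,1009,1007,-1023,951,1024,1019,-1024,-816,-81,1024,1024,1016,1022,1024,443,-762,1024,0,0],
  [1024,1022,1024,-1024,-1024,1024,1024,1024,1024,-1021,1024,1024,-1023,1023,149,1024,-1022,1011,1024,807,442,-1024,-1024,-1021,491,1024,1024,-1024,-1024,1003,1024,-113,-127,-461,1024,0],
  [-1024,-1024,-1024,1024,-1024,-1024,1024,1024,1024,1024,1024,-1024,-981,1024,-1024,1024,1024,-1024,1024,1024,-1024,-1024,-1024,1024,-1024,1024,1024,1024,1024,1024,1024,-1024,-1024,-1024,-1024,1024]]"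

definition DI :: "int list" where "DI = [4096,4092,4107,4104,4103,4099,4108,4131,4574,8085,6528,8056,5775,8999,9300,6643,11255,9013,9575,22743,20889,11650,26300,30151,28741,52361,19844,75834,43421,124375,49959,181622,268765,333963,331441,1746154]"

definition TT :: int where "TT = 4341510062"

definition dotp :: "int list \<Rightarrow> int list \<Rightarrow> int" where "dotp xs ys = sum_list (map2 (*) xs ys)"

definition chkS :: bool where
  "chkS = (length LI = 36 \<and> length VC = 36 \<and> length DI = 36 \<and>
     list_all (\<lambda>i. list_all (\<lambda>j.
        (i < j \<longrightarrow> LI!i!j = 0) \<and> (i = j \<longrightarrow> LI!i!j = 1024) \<and> \<bar>LI!i!j\<bar> \<le> 1024 \<and>
        (i < j \<longrightarrow> VC!i!j = 0) \<and> (i = j \<longrightarrow> VC!i!j = 1024) \<and> \<bar>VC!i!j\<bar> \<le> 1024) [0..<36]) [0..<36] \<and>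
     list_all (\<lambda>x. 0 < x) DI \<and> list_all (\<lambda>r. length r = 36) LI \<and> list_all (\<lambda>r. length r = 36) VC \<and>
     0 < TT \<and> 400 * TT \<le> DI ! 35 * 1048576)"

lemma chkS: chkS by code_simp

definition chk4 :: bool where "chk4 = list_all (\<lambda>r. list_all (\<lambda>c. \<bar>dotp r (map2 (*) DI c)\<bar> \<le> TT) VC) LI"

lemma chk4: chk4 by code_simp


lemma dotp_sum: "length xs = n \<Longrightarrow> length ys = n \<Longrightarrow> dotp xs ys = (\<Sum>l<n. xs!l * ys!l)"
  unfolding dotp_def by (simp add: sum_list_sum_nth atLeast0LessThan)

lemma chkS_facts:
  shows lenLI: "length LI = 36" and lenVC: "length VC = 36" and lenDI: "length DI = 36"
    and struct: "\<And>i j. i < 36 \<Longrightarrow> j < 36 \<Longrightarrow>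
        (i < j \<longrightarrow> LI!i!j = 0) \<and> (i = j \<longrightarrow> LI!i!j = 1024) \<and> \<bar>LI!i!j\<bar> \<le> 1024 \<and>
        (i < j \<longrightarrow> VC!i!j = 0) \<and> (i = j \<longrightarrow> VC!i!j = 1024) \<and> \<bar>VC!i!j\<bar> \<le> 1024"
    and DIpos: "\<And>l. l < 36 \<Longrightarrow> 0 < DI ! l"
    and rowLI: "\<And>i. i < 36 \<Longrightarrow> length (LI ! i) = 36"
    and rowVC: "\<And>i. i < 36 \<Longrightarrow> length (VC ! i) = 36"
    and TTpos: "0 < TT" and big: "400 * TT \<le> DI ! 35 * 1048576"
proof -
  note c = chkS[unfolded chkS_def]
  show "length LI = 36" "length VC = 36" "length DI = 36" using c by auto
  show "\<And>i j. i < 36 \<Longrightarrow> j < 36 \<Longrightarrow>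
        (i < j \<longrightarrow> LI!i!j = 0) \<and> (i = j \<longrightarrow> LI!i!j = 1024) \<and> \<bar>LI!i!j\<bar> \<le> 1024 \<and>
        (i < j \<longrightarrow> VC!i!j = 0) \<and> (i = j \<longrightarrow> VC!i!j = 1024) \<and> \<bar>VC!i!j\<bar> \<le> 1024"
  proof -
    fix i j :: nat assume "i < 36" "j < 36"
    then show "(i < j \<longrightarrow> LI!i!j = 0) \<and> (i = j \<longrightarrow> LI!i!j = 1024) \<and> \<bar>LI!i!j\<bar> \<le> 1024 \<and>
        (i < j \<longrightarrow> VC!i!j = 0) \<and> (i = j \<longrightarrow> VC!i!j = 1024) \<and> \<bar>VC!i!j\<bar> \<le> 1024"
      using conjunct1[OF conjunct2[OF conjunct2[OF conjunct2[OF c]]]]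
      unfolding list_all_iff by auto
  qed
  show "\<And>l. l < 36 \<Longrightarrow> 0 < DI ! l" using c by (auto simp: list_all_length)
  show "\<And>i. i < 36 \<Longrightarrow> length (LI ! i) = 36" using c by (auto simp: list_all_length)
  show "\<And>i. i < 36 \<Longrightarrow> length (VC ! i) = 36" using c by (auto simp: list_all_length)
  show "0 < TT" "400 * TT \<le> DI ! 35 * 1048576" using c by auto
qed

lemma entries_bound:
  assumes "i < 36" "j < 36"
  shows "\<bar>\<Sum>l<36. LI!i!l * (DI!l * VC!j!l)\<bar> \<le> TT"
proof -
  have "\<bar>dotp (LI!i) (map2 (*) DI (VC!j))\<bar> \<le> TT"
    using chk4 assms lenLI lenVC unfolding chk4_def by (auto simp: list_all_length)
  moreover have "dotp (LI!i) (map2 (*) DI (VC!j)) = (\<Sum>l<36. LI!i!l * (DI!l * VC!j!l))"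
    using assms rowLI rowVC lenDI by (simp add: dotp_sum)
  ultimately show ?thesis by simp
qed

definition Lb :: "nat \<Rightarrow> nat \<Rightarrow> complex" where
  "Lb i j = (if i < 36 \<and> j < 36 then of_int (LI ! i ! j) / 1024 else if i = j then 1 else 0)"
definition Vb :: "nat \<Rightarrow> nat \<Rightarrow> complex" where
  "Vb l j = (if l < 36 \<and> j < 36 then of_int (VC ! j ! l) / 1024 else if l = j then 1 else 0)"
definition db :: "nat \<Rightarrow> complex" where
  "db l = (if l < 36 then of_int (DI ! l) * 1048576 / of_int TT else 1)"

lemma norm_of_int_div: "norm (of_int a / (1024::complex)) \<le> 1 \<longleftrightarrow> \<bar>a\<bar> \<le> 1024"
proof -
  have "norm (of_int a / (1024::complex)) = \<bar>of_int a\<bar> / 1024"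
    by (simp add: norm_divide)
  then show ?thesis using of_int_le_iff[of "\<bar>a\<bar>" 1024] by simp
qed

lemma num_bound: "real 36 powr 1.669 \<le> 400"
proof -
  have A1: "real 36 powr 1.669 \<le> 36 powr (107/64)" by (simp only: of_nat_numeral) (intro powr_mono, simp_all)
  have "((36::real) powr (107/64)) ^ Suc 63 \<le> 400 ^ Suc 63"
  proof -
    have "((36::real) powr (107/64)) ^ Suc 63 = 36 powr (real (Suc 63) * (107/64))"
      by (rule powr_power) simp
    also have "\<dots> = 36 powr (real (107::nat))" by simp
    also have "\<dots> = 36 ^ 107" by (rule powr_realpow) simp
    also have "\<dots> \<le> (400::real) ^ Suc 63" by simp
    finally show ?thesis .
  qed
  then have "(36::real) powr (107/64) \<le> 400" by (rule power_le_imp_le_base) simp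
  with A1 show ?thesis by linarith
qed

theorem theorem1p2:
  fixes n :: nat
  assumes "n \<ge> 1"
  shows "growth_sup n (RP n \<real>) > ereal (real n powr 1.669 / 641)"
proof (rule main_from_base[where m=36 and Lb=Lb and Vb=Vb and db=db and c=400])
  show "(2::nat) \<le> 36" by simp
  show "\<And>i l. i < l \<Longrightarrow> Lb i l = 0" using struct by (auto simp: Lb_def)
  show "\<And>i. Lb i i = 1" using struct by (auto simp: Lb_def)
  show "\<And>l j. j < l \<Longrightarrow> Vb l j = 0" using struct by (auto simp: Vb_def)
  show "\<And>i. Vb i i = 1" using struct by (auto simp: Vb_def)
  show "db l \<noteq> 0" if l: "l < 36" for l
  proof -
    have "0 < DI ! l" using l by (rule DIpos)
    then show ?thesis using TTpos l by (simp add: db_def)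
  qed
  show "norm (Lb i j) \<le> 1" for i j
  proof (cases "i < 36 \<and> j < 36")
    case True
    then have "\<bar>LI ! i ! j\<bar> \<le> 1024" using struct by blast
    then have "norm (of_int (LI ! i ! j) / (1024::complex)) \<le> 1" using norm_of_int_div by blast
    then show ?thesis using True by (simp add: Lb_def)
  next
    case False
    then show ?thesis by (auto simp: Lb_def)
  qed
  show "norm (Vb i j) \<le> 1" for i j
  proof (cases "i < 36 \<and> j < 36")
    case True
    then have "\<bar>VC ! j ! i\<bar> \<le> 1024" using struct by blast
    then have "norm (of_int (VC ! j ! i) / (1024::complex)) \<le> 1" using norm_of_int_div by blast
    then show ?thesis using True by (simp add: Vb_def)
  next
    case False
    then show ?thesis by (auto simp: Vb_def)
  qed
  show "\<And>i j. Lb i j \<in> \<real>" by (auto simp: Lb_def)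
  show "\<And>i j. Vb i j \<in> \<real>" by (auto simp: Vb_def)
  show "\<And>l. db l \<in> \<real>" by (auto simp: db_def)
  show "\<And>i j. i<36 \<Longrightarrow> j<36 \<Longrightarrow> norm (ldv 36 Lb db Vb i j) \<le> 1"
  proof -
    fix i j :: nat assume i: "i < 36" and j: "j < 36"
    define S where "S = (\<Sum>l<36. LI!i!l * (DI!l * VC!j!l))"
    have "ldv 36 Lb db Vb i j = (\<Sum>l<36. of_int (LI!i!l * (DI!l * VC!j!l))) / of_int TT"
      unfolding ldv_def sum_divide_distrib
      using i j by (intro sum.cong refl) (simp add: Lb_def Vb_def db_def field_simps)
    also have "\<dots> = of_int S / of_int TT" unfolding S_def by simp
    finally have e: "ldv 36 Lb db Vb i j = of_int S / of_int TT" .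
    have "norm (ldv 36 Lb db Vb i j) = norm (of_int S :: complex) / norm (of_int TT :: complex)"
      unfolding e norm_divide ..
    also have "\<dots> = \<bar>real_of_int S\<bar> / real_of_int TT" by (simp only: norm_of_int) (use TTpos in simp)
    also have "\<dots> \<le> 1" using entries_bound[OF i j, folded S_def] TTpos by simp
    finally show "norm (ldv 36 Lb db Vb i j) \<le> 1" .
  qed
  show "400 \<le> norm (db (36 - 1))"
  proof -
    have "norm (db 35) = real_of_int (DI ! 35) * 1048576 / real_of_int TT"
      using DIpos[of 35] TTpos by (simp add: db_def norm_divide norm_mult)
    moreover have "400 * real_of_int TT \<le> real_of_int (DI ! 35) * 1048576"
      using big by linarith
    ultimately show ?thesis using TTpos by (simp add: le_divide_eq)
  qed
  show "real 36 powr 1.669 \<le> 400" by (rule num_bound)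
  show "(400::real) \<le> 641" by simp
  show "1 \<le> n" by (rule assms)
qed


end
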